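(* For any continuous function $f\in C(\Omega)$: \[ |f|_{\infty} \;\geq\; \sup_{g\in L^2(\mu),\ |g|=1} \big| f\,(g\circ\sigma) \big| \;\geq\; |L f|_{\infty}. \] Furthermore, if $f\in C(\Omega)$ does not depend on the first coordinate (that is, if $f$ is $\sigma^{-1}(\mathfrak{B})$-measurable, where $\mathfrak{B}$ is the Borel sigma-algebra of $\Omega$), then both inequalities in the display above are equalities.
   Context: Let $\Omega=\{0,1\}^{\mathbb{N}}$ with the shift map $\sigma$, and let $\mu$ be the measure of maximal entropy for $\sigma$. For $x\in\Omega$ and $a\in\{0,1\}$, $ax$ denotes the sequence obtained by concatenating the symbol $a$ to the left of $x$. The Ruelle operator $L: L^2(\mu)\to L^2(\mu)$ is given by $L(g)(x)=\frac{1}{2}\big(g(0x)+g(1x)\big)$, and the Koopman operator $K=L^{\dagger}$ is given by $K(g)=g\circ\sigma$. Here $|\cdot|$ denotes the $L^2(\mu)$-norm and $|\cdot|_{\infty}$ the supremum norm; $f$ denotes a continuous real function and $g$ a square-integrable function. *)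

theory Defs
  imports "HOL-Probability.Probability"
begin

text \<open>The full shift space Omega = {0,1}^N is modelled as the type nat => bool,
  with symbol 0 encoded as False and symbol 1 encoded as True.\<close>

type_synonym omega = "nat \<Rightarrow> bool"

definition Omega_top :: "omega topology" where
  "Omega_top = product_topology (\<lambda>_. discrete_topology UNIV) UNIV"

definition cont_Omega :: "(omega \<Rightarrow> real) \<Rightarrow> bool" where
  "cont_Omega f \<longleftrightarrow> continuous_map Omega_top euclideanreal f"

definition shift :: "omega \<Rightarrow> omega" where
  "shift x = (\<lambda>n. x (Suc n))"

definition cons_sym :: "bool \<Rightarrow> omega \<Rightarrow> omega" where
  "cons_sym a x = (\<lambda>n. case n of 0 \<Rightarrow> a | Suc m \<Rightarrow> x m)"

text \<open>Measure of maximal entropy: the (1/2,1/2) Bernoulli product measure.\<close>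
definition mu :: "omega measure" where
  "mu = PiM UNIV (\<lambda>_::nat. measure_pmf (bernoulli_pmf (1/2)))"

definition ruelle :: "(omega \<Rightarrow> real) \<Rightarrow> omega \<Rightarrow> real" where
  "ruelle g x = (g (cons_sym False x) + g (cons_sym True x)) / 2"

definition L2_mu :: "(omega \<Rightarrow> real) set" where
  "L2_mu = {g. g \<in> borel_measurable mu \<and> integrable mu (\<lambda>x. (g x)\<^sup>2)}"

definition L2_norm :: "(omega \<Rightarrow> real) \<Rightarrow> real" where
  "L2_norm g = sqrt (\<integral>x. (g x)\<^sup>2 \<partial>mu)"

definition sup_norm :: "(omega \<Rightarrow> real) \<Rightarrow> real" where
  "sup_norm f = (SUP x. \<bar>f x\<bar>)"

end

theory Submission
  imports Defs
begin

abbreviation "BB \<equiv> measure_pmf (bernoulli_pmf (1/2))"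

definition cyl :: "bool list \<Rightarrow> omega set" where
  "cyl xs = {y. \<forall>i<length xs. y i = xs!i}"

lemma space_mu[simp]: "space mu = UNIV"
  by (simp add: mu_def space_PiM)

lemma seqsp: "sequence_space BB"
  unfolding sequence_space_def by (rule product_prob_spaceI) (rule prob_space_measure_pmf)

lemma prob_mu: "prob_space mu"
  unfolding mu_def by (intro prob_space_PiM) (simp add: prob_space_measure_pmf)

lemma cyl_emb: "cyl xs = prod_emb UNIV (\<lambda>_. BB) {..<length xs} (PiE {..<length xs} (\<lambda>i. {xs!i}))"
  unfolding cyl_def by (rule set_eqI) (simp add: prod_emb_iff restrict_PiE_iff Pi_iff Ball_def)

lemma cyl_sets[measurable]: "cyl xs \<in> sets mu"
  unfolding cyl_emb mu_def by (intro sets_PiM_I) auto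

lemma cyl_emeasure: "emeasure mu (cyl xs) = ennreal ((1/2)^length xs)"
proof -
  have "emeasure mu (cyl xs) = (\<Prod>i<length xs. emeasure BB {xs!i})"
    unfolding cyl_emb mu_def by (intro emeasure_PiM_emb) (auto simp: prob_space_measure_pmf)
  also have "\<dots> = (\<Prod>i<length xs. ennreal (1/2))"
    by (intro prod.cong refl) (simp add: emeasure_pmf_single)
  also have "\<dots> = ennreal ((1/2)^length xs)"
    by (simp add: prod_ennreal ennreal_power[symmetric])
  finally show ?thesis .
qed

lemma cyl_measure: "measure mu (cyl xs) = (1/2)^length xs"
  by (simp add: measure_def cyl_emeasure)

lemma shift_meas[measurable]: "shift \<in> measurable mu mu"
  unfolding mu_def shift_def by (intro measurable_PiM_single') (auto simp: space_PiM)

lemma shift_inv: "distr mu mu shift = mu"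
proof -
  interpret S: sequence_space BB by (rule seqsp)
  have mS: "mu = S.S" by (simp add: mu_def)
  have cn: "(\<lambda>(s, \<omega>). case_nat s \<omega>) \<in> measurable (BB \<Otimes>\<^sub>M S.S) S.S"
  proof (rule measurable_PiM_single')
    fix i show "(\<lambda>\<omega>. (case \<omega> of (s, \<omega>) \<Rightarrow> case_nat s \<omega>) i) \<in> measurable (BB \<Otimes>\<^sub>M S.S) BB"
      by (cases i) (simp_all add: split_beta')
  qed (auto simp: space_PiM split: nat.split)
  have "distr mu mu shift = distr (distr (BB \<Otimes>\<^sub>M S.S) S.S (\<lambda>(s, \<omega>). case_nat s \<omega>)) S.S shift"
    using S.PiM_iter mS by simp
  also have "\<dots> = distr (BB \<Otimes>\<^sub>M S.S) S.S (shift \<circ> (\<lambda>(s, \<omega>). case_nat s \<omega>))"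
    by (rule distr_distr[OF _ cn]) (use shift_meas mS in simp)
  also have "shift \<circ> (\<lambda>(s, \<omega>). case_nat s \<omega>) = snd"
    by (auto simp: shift_def fun_eq_iff)
  also have "distr (BB \<Otimes>\<^sub>M S.S) S.S snd = S.S"
  proof (rule measure_eqI)
    fix A assume "A \<in> sets (distr (BB \<Otimes>\<^sub>M S.S) S.S snd)"
    then have A: "A \<in> sets S.S" by simp
    have "emeasure (distr (BB \<Otimes>\<^sub>M S.S) S.S snd) A = emeasure (BB \<Otimes>\<^sub>M S.S) (snd -` A \<inter> space (BB \<Otimes>\<^sub>M S.S))"
      using A by (intro emeasure_distr) auto
    also have "snd -` A \<inter> space (BB \<Otimes>\<^sub>M S.S) = UNIV \<times> A"
      using sets.sets_into_space[OF A] by (auto simp: space_pair_measure)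
    also have "emeasure (BB \<Otimes>\<^sub>M S.S) (UNIV \<times> A) = emeasure BB UNIV * emeasure S.S A"
      using A prob_mu unfolding mS[symmetric]
      by (intro sigma_finite_measure.emeasure_pair_measure_Times prob_space_imp_sigma_finite) auto
    finally show "emeasure (distr (BB \<Otimes>\<^sub>M S.S) S.S snd) A = emeasure S.S A"
      by (simp add: measure_pmf.emeasure_space_1[simplified])
  qed simp
  finally show ?thesis using mS by simp
qed


lemma top_Omega[simp]: "topspace Omega_top = UNIV"
  by (simp add: Omega_top_def)

lemma cont_sq: "cont_Omega f \<Longrightarrow> cont_Omega (\<lambda>x. (f x)^2)"
  unfolding cont_Omega_def by (rule continuous_map_real_pow)

lemma cont_open: 
  assumes "cont_Omega f" "open S" "f x \<in> S"
  shows "\<exists>n. \<forall>y. (\<forall>i<n. y i = x i) \<longrightarrow> f y \<in> S"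
proof -
  have "openin Omega_top {y \<in> topspace Omega_top. f y \<in> S}"
    using assms by (intro openin_continuous_map_preimage[of _ euclideanreal]) (auto simp: cont_Omega_def)
  then have o: "openin Omega_top {y. f y \<in> S}" by simp
  then obtain U where U: "finite {i. U i \<noteq> UNIV}" "x \<in> Pi\<^sub>E UNIV U" "Pi\<^sub>E UNIV U \<subseteq> {y. f y \<in> S}"
    using assms(3) unfolding Omega_top_def openin_product_topology_alt by fastforce
  obtain k where k: "{i. U i \<noteq> UNIV} \<subseteq> {..<k}" using finite_nat_bounded[OF U(1)] by blast
  show ?thesis
  proof (intro exI allI impI)
    fix y assume y: "\<forall>i<k. y i = x i"
    have "y \<in> Pi\<^sub>E UNIV U"
    proof -
      have "y i \<in> U i" for i
      proof (cases "i < k")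
        case True then show ?thesis using y U(2) by auto
      next
        case False then show ?thesis using k by auto
      qed
      then show ?thesis by auto
    qed
    then show "f y \<in> S" using U(3) by auto
  qed
qed

lemma cont_cyl:
  assumes "cont_Omega f" "e > 0"
  shows "\<exists>n. \<forall>y. (\<forall>i<n. y i = x i) \<longrightarrow> \<bar>f y - f x\<bar> < e"
  using cont_open[OF assms(1), of "ball (f x) e" x] assms(2) by (auto simp: dist_real_def abs_minus_commute)

lemma cont_bounded:
  assumes "cont_Omega f"
  shows "\<exists>B. \<forall>x. \<bar>f x\<bar> \<le> B"
proof -
  have "compact_space Omega_top"
    unfolding Omega_top_def by (simp add: compact_space_product_topology compact_space_discrete_topology)
  then have "compactin euclideanreal (f ` UNIV)"
    using image_compactin[of Omega_top UNIV euclideanreal f] assms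
    by (simp add: cont_Omega_def compact_space_def)
  then have "bounded (range f)" by (simp add: compact_imp_bounded)
  then show ?thesis by (auto simp: bounded_iff)
qed

lemma cyl_pre: "cyl (map x [0..<n]) = {y. \<forall>i<n. y i = x i}"
  by (auto simp: cyl_def)

lemma cont_meas:
  assumes "cont_Omega f"
  shows "f \<in> borel_measurable mu"
proof (rule borel_measurableI)
  fix S :: "real set" assume S: "open S"
  let ?C = "{xs. cyl xs \<subseteq> f -` S}"
  have eq: "f -` S = \<Union> (cyl ` ?C)"
  proof
    show "f -` S \<subseteq> \<Union> (cyl ` ?C)"
    proof
      fix x assume "x \<in> f -` S"
      then obtain n where n: "\<forall>y. (\<forall>i<n. y i = x i) \<longrightarrow> f y \<in> S"
        using cont_open[OF assms S, of x] by blast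
      then have "map x [0..<n] \<in> ?C" by (auto simp: cyl_pre)
      moreover have "x \<in> cyl (map x [0..<n])" by (simp add: cyl_pre)
      ultimately show "x \<in> \<Union> (cyl ` ?C)" by blast
    qed
  qed auto
  have "\<Union> (cyl ` ?C) \<in> sets mu"
    by (intro sets.countable_Union countable_image) (auto intro: countableI_type)
  then show "f -` S \<inter> space mu \<in> sets mu" using eq by simp
qed


lemma sup_norm_ge: "bdd_above (range (\<lambda>x. \<bar>f x\<bar>)) \<Longrightarrow> \<bar>f x\<bar> \<le> sup_norm f"
  unfolding sup_norm_def by (rule cSUP_upper) auto

lemma bdd_f: "cont_Omega f \<Longrightarrow> bdd_above (range (\<lambda>x. \<bar>f x\<bar>))"
  using cont_bounded[of f] by (auto simp: bdd_above_def)

lemma upper: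
  assumes f: "cont_Omega f" and g: "g \<in> L2_mu" "L2_norm g = 1"
  shows "L2_norm (\<lambda>x. f x * g (shift x)) \<le> sup_norm f"
proof -
  let ?M = "sup_norm f"
  have fM: "\<bar>f x\<bar> \<le> ?M" for x using sup_norm_ge[OF bdd_f[OF f]] .
  have M0: "0 \<le> ?M" using fM[of undefined] by linarith
  have gm[measurable]: "g \<in> borel_measurable mu" and gi: "integrable mu (\<lambda>x. (g x)^2)"
    using g by (auto simp: L2_mu_def)
  have g1: "(\<integral>x. (g x)^2 \<partial>mu) = 1" using g(2) unfolding L2_norm_def by simp
  have gsi: "integrable mu (\<lambda>x. (g (shift x))^2)"
    using gi integrable_distr_eq[OF shift_meas, of "\<lambda>x. (g x)^2"] shift_inv by simp
  have gs1: "(\<integral>x. (g (shift x))^2 \<partial>mu) = 1"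
    using g1 integral_distr[OF shift_meas, of "\<lambda>x. (g x)^2"] shift_inv by simp
  show ?thesis
  proof (cases "integrable mu (\<lambda>x. (f x * g (shift x))^2)")
    case False
    then show ?thesis using M0 by (simp add: L2_norm_def not_integrable_integral_eq)
  next
    case True
    have "(\<integral>x. (f x * g (shift x))^2 \<partial>mu) \<le> (\<integral>x. ?M^2 * (g (shift x))^2 \<partial>mu)"
    proof (rule integral_mono[OF True])
      show "integrable mu (\<lambda>x. ?M^2 * (g (shift x))^2)" using gsi by simp
      fix x
      have "(f x)^2 \<le> ?M^2" using fM[of x] M0 by (metis abs_le_square_iff abs_of_nonneg)
      then show "(f x * g (shift x))^2 \<le> ?M^2 * (g (shift x))^2"
        unfolding power_mult_distrib by (rule mult_right_mono) simp
    qed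
    also have "\<dots> = ?M^2" using gs1 by simp
    finally have "sqrt (\<integral>x. (f x * g (shift x))^2 \<partial>mu) \<le> sqrt (?M^2)" by (rule real_sqrt_le_mono)
    then show ?thesis using M0 by (simp add: L2_norm_def)
  qed
qed


lemma exists_g:
  assumes f: "cont_Omega f" and eta: "\<eta> > 0"
  shows "\<exists>g. g \<in> L2_mu \<and> L2_norm g = 1 \<and>
     ruelle (\<lambda>y. (f y)^2) x - \<eta> \<le> (L2_norm (\<lambda>y. f y * g (shift y)))^2"
proof -
  interpret P: prob_space mu by (rule prob_mu)
  let ?F = "\<lambda>y. (f y)^2"
  define a0 where "a0 = cons_sym False x"
  define a1 where "a1 = cons_sym True x"
  obtain n0 where n0: "\<forall>y. (\<forall>i<n0. y i = a0 i) \<longrightarrow> \<bar>?F y - ?F a0\<bar> < \<eta>"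
    using cont_cyl[OF cont_sq[OF f] eta] by blast
  obtain n1 where n1: "\<forall>y. (\<forall>i<n1. y i = a1 i) \<longrightarrow> \<bar>?F y - ?F a1\<bar> < \<eta>"
    using cont_cyl[OF cont_sq[OF f] eta] by blast
  define n where "n = max n0 n1"
  define xs where "xs = map x [0..<n]"
  define c where "c = (2::real)^n"
  define g where "g = (\<lambda>y. if y \<in> cyl xs then sqrt c else 0)"
  define A0 where "A0 = cyl (False # xs)"
  define A1 where "A1 = cyl (True # xs)"
  have c0: "c > 0" by (simp add: c_def)
  have cm: "c * (1/2)^n = 1" by (simp add: c_def power_mult_distrib[symmetric])
  have ind_int: "integrable mu (indicator A :: _ \<Rightarrow> real)" if "A \<in> sets mu" for A
    by (rule integrable_real_indicator[OF that]) (simp add: P.emeasure_finite less_top[symmetric])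
  have gm[measurable]: "g \<in> borel_measurable mu" unfolding g_def by measurable
  have g2: "(g y)^2 = c * indicator (cyl xs) y" for y using c0 by (simp add: g_def indicator_def)
  have gL2: "g \<in> L2_mu" unfolding L2_mu_def using g2 ind_int[OF cyl_sets[of xs]] by simp
  have "(\<integral>y. (g y)^2 \<partial>mu) = c * measure mu (cyl xs)"
    by (simp add: g2)
  also have "\<dots> = 1" using cm by (simp add: cyl_measure xs_def)
  finally have gn: "L2_norm g = 1" by (simp add: L2_norm_def)
  have A0s[measurable]: "A0 \<in> sets mu" and A1s[measurable]: "A1 \<in> sets mu" by (simp_all add: A0_def A1_def)
  have sh: "shift y \<in> cyl xs \<longleftrightarrow> y \<in> A0 \<or> y \<in> A1" for y
  proof -
    have "shift y \<in> cyl xs \<longleftrightarrow> (\<forall>i<n. y (Suc i) = x i)" by (simp add: cyl_def xs_def shift_def)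
    moreover have "y \<in> A0 \<longleftrightarrow> y 0 = False \<and> (\<forall>i<n. y (Suc i) = x i)"
      by (auto simp: A0_def cyl_def xs_def nth_Cons less_Suc_eq_0_disj split: nat.splits)
    moreover have "y \<in> A1 \<longleftrightarrow> y 0 = True \<and> (\<forall>i<n. y (Suc i) = x i)"
      by (auto simp: A1_def cyl_def xs_def nth_Cons less_Suc_eq_0_disj split: nat.splits)
    ultimately show ?thesis by (cases "y 0") auto
  qed
  have dis: "\<not> (y \<in> A0 \<and> y \<in> A1)" for y by (auto simp: A0_def A1_def cyl_def)
  have in0: "?F a0 - \<eta> \<le> ?F y" if "y \<in> A0" for y
  proof -
    have "\<forall>i<n0. y i = a0 i"
    proof (intro allI impI)
      fix i assume "i < n0"
      then show "y i = a0 i" using that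
        by (cases i) (auto simp: A0_def cyl_def xs_def a0_def cons_sym_def n_def)
    qed
    then have "\<bar>?F y - ?F a0\<bar> < \<eta>" using n0 by blast
    then show ?thesis by linarith
  qed
  have in1: "?F a1 - \<eta> \<le> ?F y" if "y \<in> A1" for y
  proof -
    have "\<forall>i<n1. y i = a1 i"
    proof (intro allI impI)
      fix i assume "i < n1"
      then show "y i = a1 i" using that
        by (cases i) (auto simp: A1_def cyl_def xs_def a1_def cons_sym_def n_def)
    qed
    then have "\<bar>?F y - ?F a1\<bar> < \<eta>" using n1 by blast
    then show ?thesis by linarith
  qed
  let ?h = "\<lambda>y. (f y * g (shift y))^2"
  let ?l = "\<lambda>y. c * ((?F a0 - \<eta>) * indicator A0 y + (?F a1 - \<eta>) * indicator A1 y)"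
  have fm[measurable]: "f \<in> borel_measurable mu" by (rule cont_meas[OF f])
  obtain B where B: "\<And>y. \<bar>f y\<bar> \<le> B" using cont_bounded[OF f] by blast
  have hint: "integrable mu ?h"
  proof (rule P.integrable_const_bound[where B="B^2 * c"])
    show "AE y in mu. norm (?h y) \<le> B^2 * c"
    proof (rule AE_I2)
      fix y
      have "(f y)^2 \<le> B^2" using B[of y] by (metis abs_le_square_iff abs_of_nonneg abs_ge_zero order_trans)
      moreover have "(g (shift y))^2 \<le> c" by (simp add: g2 indicator_def c0 less_imp_le)
      ultimately have "(f y)^2 * (g (shift y))^2 \<le> B^2 * c"
        by (intro mult_mono) auto
      moreover have "norm (?h y) = (f y)^2 * (g (shift y))^2" by (simp add: power_mult_distrib)
      ultimately show "norm (?h y) \<le> B^2 * c" by simp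
    qed
  qed measurable
  have lint: "integrable mu ?l" using ind_int[OF A0s] ind_int[OF A1s] by simp
  have hl: "?l y \<le> ?h y" for y
  proof -
    have hy: "?h y = c * ?F y * indicator (cyl xs) (shift y)"
      by (simp add: power_mult_distrib g2)
    show ?thesis
    proof (cases "y \<in> A0")
      case True
      then show ?thesis using dis[of y] sh[of y] in0[OF True] c0 by (simp add: hy)
    next
      case False
      show ?thesis
      proof (cases "y \<in> A1")
        case True
        then show ?thesis using False sh[of y] in1[OF True] c0 by (simp add: hy)
      next
        case False2: False
        then show ?thesis using False sh[of y] c0 by (simp add: hy)
      qed
    qed
  qed
  have "(\<integral>y. ?l y \<partial>mu) = c * ((?F a0 - \<eta>) * (1/2)^(Suc n) + (?F a1 - \<eta>) * (1/2)^(Suc n))"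
    using ind_int[OF A0s] ind_int[OF A1s]
    by (simp add: A0_def A1_def cyl_measure xs_def)
  also have "\<dots> = ruelle ?F x - \<eta>"
  proof -
    have e: "c * (1/2)^(Suc n) = 1/2" using cm by simp
    have d: "c * ((A - \<eta>) * p + (B - \<eta>) * p) = (A - \<eta>) * (c*p) + (B - \<eta>) * (c*p)" for A B p :: real
      by (simp add: algebra_simps)
    show ?thesis unfolding ruelle_def a0_def a1_def d e by (simp add: field_simps)
  qed
  finally have "ruelle ?F x - \<eta> \<le> (\<integral>y. ?h y \<partial>mu)"
    using integral_mono[OF lint hint hl] by simp
  moreover have "(L2_norm (\<lambda>y. f y * g (shift y)))^2 = (\<integral>y. ?h y \<partial>mu)"
    unfolding L2_norm_def by (simp add: integral_nonneg_AE)
  ultimately show ?thesis using gL2 gn by auto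
qed


lemma aux_lin: "(v::real) \<le> t \<Longrightarrow> (a::real) \<le> b \<Longrightarrow> b - (a - t)/2 \<le> v \<Longrightarrow> t < a \<Longrightarrow> False"
  by (simp add: field_simps)

theorem lemma2p14:
  fixes f :: "omega \<Rightarrow> real"
  assumes "cont_Omega f"
  shows "sup_norm f \<ge> (SUP g\<in>{g\<in>L2_mu. L2_norm g = 1}. L2_norm (\<lambda>x. f x * g (shift x)))
         \<and> (SUP g\<in>{g\<in>L2_mu. L2_norm g = 1}. L2_norm (\<lambda>x. f x * g (shift x))) \<ge> sup_norm (ruelle f)
         \<and> ((\<forall>x y. (\<forall>n. x (Suc n) = y (Suc n)) \<longrightarrow> f x = f y) \<longrightarrow>
              sup_norm f = (SUP g\<in>{g\<in>L2_mu. L2_norm g = 1}. L2_norm (\<lambda>x. f x * g (shift x)))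
            \<and> (SUP g\<in>{g\<in>L2_mu. L2_norm g = 1}. L2_norm (\<lambda>x. f x * g (shift x))) = sup_norm (ruelle f))"
proof -
  note f = assms
  define S where "S = {g\<in>L2_mu. L2_norm g = 1}"
  define V where "V = (\<lambda>g. L2_norm (\<lambda>x. f x * g (shift x)))"
  define s where "s = (SUP g\<in>S. V g)"
  have up: "V g \<le> sup_norm f" if "g \<in> S" for g
    using upper[OF f] that by (simp add: S_def V_def)
  have bdd: "bdd_above (V ` S)" using up by (auto simp: bdd_above_def)
  have Vu: "V g \<le> s" if "g \<in> S" for g unfolding s_def by (rule cSUP_upper[OF that bdd])
  have V0: "0 \<le> V g" for g by (simp add: V_def L2_norm_def)
  obtain g0 where g0: "g0 \<in> S" using exists_g[OF f, of 1 undefined] by (auto simp: S_def)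
  have ne: "S \<noteq> {}" using g0 by auto
  have s0: "0 \<le> s" using Vu[OF g0] V0[of g0] by linarith
  have I1: "s \<le> sup_norm f" unfolding s_def by (rule cSUP_least[OF ne up])
  have low: "\<bar>ruelle f x\<bar> \<le> s" for x
  proof (rule ccontr)
    assume "\<not> \<bar>ruelle f x\<bar> \<le> s"
    then have lt: "s < \<bar>ruelle f x\<bar>" by simp
    then have "s^2 < \<bar>ruelle f x\<bar>^2" using s0 by (intro power_strict_mono) auto
    then have sq: "s^2 < (ruelle f x)^2" by simp
    define \<eta> where "\<eta> = ((ruelle f x)^2 - s^2) / 2"
    have eta: "\<eta> > 0" using sq by (simp add: \<eta>_def)
    obtain g where g: "g \<in> S" and gl: "ruelle (\<lambda>y. (f y)^2) x - \<eta> \<le> (V g)^2"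
      using exists_g[OF f eta, of x] by (auto simp: S_def V_def)
    have "(V g)^2 \<le> s^2" using Vu[OF g] V0[of g] by (intro power_mono) auto
    moreover have "(ruelle f x)^2 \<le> ruelle (\<lambda>y. (f y)^2) x"
    proof -
      have "0 \<le> (f (cons_sym False x) - f (cons_sym True x))^2" by simp
      then show ?thesis unfolding ruelle_def by (simp add: power2_eq_square field_simps)
    qed
    ultimately show False using gl sq unfolding \<eta>_def by (rule aux_lin)
  qed
  have I2: "sup_norm (ruelle f) \<le> s" unfolding sup_norm_def by (rule cSUP_least) (auto intro: low)
  have I3: "sup_norm f \<le> sup_norm (ruelle f)" if ind: "\<forall>x y. (\<forall>n. x (Suc n) = y (Suc n)) \<longrightarrow> f x = f y"
  proof -
    obtain B where B: "\<And>y. \<bar>f y\<bar> \<le> B" using cont_bounded[OF f] by blast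
    have rb: "\<bar>ruelle f y\<bar> \<le> B" for y
      using B[of "cons_sym False y"] B[of "cons_sym True y"] unfolding ruelle_def by (auto simp: abs_le_iff field_simps)
    have bddr: "bdd_above (range (\<lambda>x. \<bar>ruelle f x\<bar>))" using rb by (auto simp: bdd_above_def)
    have "\<bar>f y\<bar> \<le> sup_norm (ruelle f)" for y
    proof -
      have e0: "f (cons_sym False (shift y)) = f y"
        using ind by (auto simp: cons_sym_def shift_def)
      have e1: "f (cons_sym True (shift y)) = f y"
        using ind by (auto simp: cons_sym_def shift_def)
      have "ruelle f (shift y) = f y" unfolding ruelle_def e0 e1 by simp
      then show ?thesis using sup_norm_ge[OF bddr, of "shift y"] by simp
    qed
    then show ?thesis unfolding sup_norm_def[of f] by (intro cSUP_least) auto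
  qed
  show ?thesis
    using I1 I2 I3 unfolding s_def S_def V_def by auto
qed

end
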